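(* Let $A \in \{0,1\}^{n \times n}$ be a uniformly random binary matrix (entries i.i.d. taking values $0$ and $1$ with probability $1/2$ each). Then \[ \mathbb{P}[A \text{ is factorizable}] \leq \sum_{(n_1,n_2) \in \mathcal{C}} \frac{2^{n_1^2+n_2^2}}{2^{n^2}}, \] where $\mathcal{C}$ is the set of compatible pairs for $n$.
   Context: A compatible pair for $n$ is a pair of integers $(n_1,n_2)$ with $n_1,n_2$ positive divisors of $n$, $n_1,n_2\notin\{1,n\}$, and $n_1n_2=n$. A binary matrix $A\in\{0,1\}^{n\times n}$ is factorizable (decomposable) if there exist $\ell>1$ and matrices $A_i\in\{0,1\}^{n_i\times n_i}$ with $n_i>1$ such that $A=A_1\otimes\cdots\otimes A_\ell$, where the Kronecker product uses Boolean arithmetic ($1+1=1$). *)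

theory Defs
  imports "HOL-Probability.Probability"
begin

text \<open>Binary n x n matrices are modelled as Boolean-valued functions on index pairs,
  extensional: entries outside {0..<n} x {0..<n} are False. True = 1, False = 0.\<close>

type_synonym bmat = "nat \<Rightarrow> nat \<Rightarrow> bool"

definition bmats :: "nat \<Rightarrow> bmat set" where
  "bmats n = {A. \<forall>i j. (n \<le> i \<or> n \<le> j) \<longrightarrow> \<not> A i j}"

definition bkron :: "nat \<Rightarrow> nat \<Rightarrow> bmat \<Rightarrow> bmat \<Rightarrow> bmat" where
  "bkron m p A B = (\<lambda>i j. i < m * p \<and> j < m * p \<and>
      A (i div p) (j div p) \<and> B (i mod p) (j mod p))"

fun bkron_list :: "(nat \<times> bmat) list \<Rightarrow> bmat" where
  "bkron_list [] = (\<lambda>i j. i = 0 \<and> j = 0)"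
| "bkron_list ((k, A) # fs) = bkron k (prod_list (map fst fs)) A (bkron_list fs)"

definition factorizable :: "nat \<Rightarrow> bmat \<Rightarrow> bool" where
  "factorizable n A \<longleftrightarrow> (\<exists>fs. length fs > 1 \<and>
      (\<forall>(k, B) \<in> set fs. k > 1 \<and> B \<in> bmats k) \<and>
      prod_list (map fst fs) = n \<and> A = bkron_list fs)"

definition compatible_pairs :: "nat \<Rightarrow> (nat \<times> nat) set" where
  "compatible_pairs n = {(n1, n2). n1 > 0 \<and> n2 > 0 \<and> n1 dvd n \<and> n2 dvd n \<and>
      n1 \<notin> {1, n} \<and> n2 \<notin> {1, n} \<and> n1 * n2 = n}"

end

theory Submission
  imports Defs
begin

lemma bmats_image:
  "bmats n = (\<lambda>S i j. (i,j) \<in> S) ` Pow ({..<n}\<times>{..<n})"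
proof
  show "bmats n \<subseteq> (\<lambda>S i j. (i,j) \<in> S) ` Pow ({..<n}\<times>{..<n})"
  proof
    fix A assume A: "A \<in> bmats n"
    have "A = (\<lambda>i j. (i,j) \<in> {(i,j). A i j})" by simp
    moreover have "{(i,j). A i j} \<in> Pow ({..<n}\<times>{..<n})"
      using A unfolding bmats_def by (auto simp: not_le[symmetric])
    ultimately show "A \<in> (\<lambda>S i j. (i,j) \<in> S) ` Pow ({..<n}\<times>{..<n})" by blast
  qed
  show "(\<lambda>S i j. (i,j) \<in> S) ` Pow ({..<n}\<times>{..<n}) \<subseteq> bmats n"
  proof
    fix A assume "A \<in> (\<lambda>S i j. (i,j) \<in> S) ` Pow ({..<n}\<times>{..<n})"
    then obtain S where S: "S \<subseteq> {..<n}\<times>{..<n}" and A: "A = (\<lambda>i j. (i,j) \<in> S)" by blast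
    have "\<not> A i j" if "n \<le> i \<or> n \<le> j" for i j
    proof
      assume "A i j"
      then have "(i,j) \<in> S" using A by simp
      then show False using S that by auto
    qed
    then show "A \<in> bmats n" unfolding bmats_def by blast
  qed
qed

lemma inj_mat: "inj_on (\<lambda>S i j. (i,j) \<in> (S::(nat\<times>nat) set)) X"
proof (rule inj_onI)
  fix S T assume "(\<lambda>i j. (i,j) \<in> (S::(nat\<times>nat) set)) = (\<lambda>i j. (i,j) \<in> T)"
  then have "\<And>i j. ((i,j) \<in> S) = ((i,j) \<in> T)" by metis
  then show "S = T" by auto
qed

lemma card_bmats: "card (bmats n) = 2 ^ (n^2)"
proof -
  have "card (bmats n) = card (Pow ({..<n}\<times>{..<n}))"
    unfolding bmats_image by (rule card_image[OF inj_mat])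
  also have "\<dots> = 2 ^ (n^2)" by (simp add: card_Pow card_cartesian_product power2_eq_square)
  finally show ?thesis .
qed

lemma finite_bmats: "finite (bmats n)"
  unfolding bmats_image by simp

lemma bmats_ne: "bmats n \<noteq> {}"
  unfolding bmats_def by auto

lemma bkron_in: "bkron k m A B \<in> bmats (k*m)"
  unfolding bmats_def bkron_def by auto

lemma prod_pos: "\<forall>(k, B) \<in> set fs. k > 1 \<and> B \<in> bmats k \<Longrightarrow> prod_list (map fst fs) > (0::nat)"
  by (induction fs) auto

lemma finite_cp: "finite (compatible_pairs n)"
proof -
  have "compatible_pairs n \<subseteq> {..n}\<times>{..n}"
    unfolding compatible_pairs_def by (auto intro: dvd_imp_le)
  then show ?thesis by (rule finite_subset) simp
qed

lemma fact_sub: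
  "{A. factorizable n A} \<subseteq>
     (\<Union>p\<in>compatible_pairs n. (\<lambda>(B,C). bkron (fst p) (snd p) B C) ` (bmats (fst p) \<times> bmats (snd p)))"
proof
  fix A assume "A \<in> {A. factorizable n A}"
  then obtain fs where l: "length fs > 1" and all: "\<forall>(k, B) \<in> set fs. k > 1 \<and> B \<in> bmats k"
    and pr: "prod_list (map fst fs) = n" and Aeq: "A = bkron_list fs"
    unfolding factorizable_def by auto
  obtain k B k2 B2 fs2 where fs: "fs = (k,B) # (k2,B2) # fs2"
  proof -
    obtain p1 r where r: "fs = p1 # r" using l by (cases fs) auto
    obtain p2 r2 where r2: "r = p2 # r2" using l r by (cases r) auto
    show ?thesis using that r r2 by (cases p1, cases p2) auto
  qed
  define m where "m = prod_list (map fst ((k2,B2) # fs2))"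
  have k1: "k > 1" and Bk: "B \<in> bmats k" using all fs by auto
  have "prod_list (map fst fs2) > 0" using prod_pos[of fs2] all fs by auto
  moreover have "k2 > 1" using all fs by auto
  ultimately have m1: "m > 1" unfolding m_def
    using less_le_trans[of 1 k2 "k2 * prod_list (map fst fs2)"] by simp
  have n: "n = k * m" using pr fs m_def by simp
  have Ae: "A = bkron k m B (bkron_list ((k2,B2) # fs2))" unfolding Aeq fs m_def
    by (simp only: bkron_list.simps list.map fst_conv prod_list.Cons)
  have Cm: "bkron_list ((k2,B2) # fs2) \<in> bmats m" unfolding m_def
    by (simp only: bkron_list.simps list.map fst_conv prod_list.Cons bkron_in)
  have kn: "k \<noteq> n" using k1 m1 n by simp
  have mn: "m \<noteq> n" using k1 m1 n by simp
  have cp: "(k,m) \<in> compatible_pairs n"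
    unfolding compatible_pairs_def using k1 m1 n kn mn by simp
  show "A \<in> (\<Union>p\<in>compatible_pairs n. (\<lambda>(B,C). bkron (fst p) (snd p) B C) ` (bmats (fst p) \<times> bmats (snd p)))"
  proof (rule UN_I[OF cp])
    show "A \<in> (\<lambda>(B,C). bkron (fst (k,m)) (snd (k,m)) B C) ` (bmats (fst (k,m)) \<times> bmats (snd (k,m)))"
    proof (rule image_eqI[where x="(B, bkron_list ((k2,B2) # fs2))"])
      show "A = (\<lambda>(B,C). bkron (fst (k,m)) (snd (k,m)) B C) (B, bkron_list ((k2,B2) # fs2))"
        unfolding fst_conv snd_conv case_prod_conv by (rule Ae)
      show "(B, bkron_list ((k2,B2) # fs2)) \<in> bmats (fst (k,m)) \<times> bmats (snd (k,m))"
        unfolding fst_conv snd_conv using Bk Cm by (rule SigmaI)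
    qed
  qed
qed

theorem lemma2:
  fixes n :: nat
  shows "measure_pmf.prob (pmf_of_set (bmats n)) {A. factorizable n A}
         \<le> (\<Sum>(n1, n2)\<in>compatible_pairs n. 2 ^ (n1^2 + n2^2) / 2 ^ (n^2) :: real)"
proof -
  define U where "U = (\<Union>p\<in>compatible_pairs n. (\<lambda>(B,C). bkron (fst p) (snd p) B C) ` (bmats (fst p) \<times> bmats (snd p)))"
  have eq: "measure_pmf.prob (pmf_of_set (bmats n)) {A. factorizable n A}
      = card (bmats n \<inter> {A. factorizable n A}) / card (bmats n)"
    by (rule measure_pmf_of_set[OF bmats_ne finite_bmats])
  have fU: "finite U" unfolding U_def
    by (intro finite_UN_I finite_cp finite_imageI finite_cartesian_product finite_bmats)
  have "card (bmats n \<inter> {A. factorizable n A}) \<le> card U"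
    by (rule card_mono[OF fU]) (use fact_sub in \<open>auto simp: U_def\<close>)
  also have "\<dots> \<le> (\<Sum>p\<in>compatible_pairs n. card ((\<lambda>(B,C). bkron (fst p) (snd p) B C) ` (bmats (fst p) \<times> bmats (snd p))))"
    unfolding U_def by (rule card_UN_le[OF finite_cp])
  also have "\<dots> \<le> (\<Sum>p\<in>compatible_pairs n. card (bmats (fst p) \<times> bmats (snd p)))"
    by (rule sum_mono, rule card_image_le, rule finite_cartesian_product, rule finite_bmats, rule finite_bmats)
  also have "\<dots> = (\<Sum>p\<in>compatible_pairs n. 2 ^ ((fst p)^2 + (snd p)^2))"
    by (rule sum.cong, rule refl) (simp only: card_cartesian_product card_bmats power_add)
  finally have c: "card (bmats n \<inter> {A. factorizable n A}) \<le> (\<Sum>p\<in>compatible_pairs n. (2::nat) ^ ((fst p)^2 + (snd p)^2))" .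
  then have c': "real (card (bmats n \<inter> {A. factorizable n A})) \<le> (\<Sum>p\<in>compatible_pairs n. (2::real) ^ ((fst p)^2 + (snd p)^2))"
  proof -
    have "real (card (bmats n \<inter> {A. factorizable n A})) \<le> real (\<Sum>p\<in>compatible_pairs n. (2::nat) ^ ((fst p)^2 + (snd p)^2))"
      using c by (rule of_nat_mono)
    also have "\<dots> = (\<Sum>p\<in>compatible_pairs n. (2::real) ^ ((fst p)^2 + (snd p)^2))"
      by (simp only: of_nat_sum of_nat_power of_nat_numeral)
    finally show ?thesis .
  qed
  have "measure_pmf.prob (pmf_of_set (bmats n)) {A. factorizable n A}
      \<le> (\<Sum>p\<in>compatible_pairs n. (2::real) ^ ((fst p)^2 + (snd p)^2)) / 2 ^ (n^2)"
    unfolding eq card_bmats of_nat_power of_nat_numeral by (rule divide_right_mono[OF c']) simp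
  also have "\<dots> = (\<Sum>p\<in>compatible_pairs n. 2 ^ ((fst p)^2 + (snd p)^2) / 2 ^ (n^2))"
    by (rule sum_divide_distrib)
  also have "\<dots> = (\<Sum>(n1, n2)\<in>compatible_pairs n. 2 ^ (n1^2 + n2^2) / 2 ^ (n^2) :: real)"
    by (rule sum.cong[OF refl]) (simp only: split_beta)
  finally show ?thesis .
qed
end
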